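(* For $n\ge 4$, the polynomials $W_n(t)=\sum_{\sigma\in\{-1,1\}^n} t^{\nu_W(\sigma)}$ satisfy \[ W_n(t)=W_{n-1}(t)+2W_{n-2}(t)+2(t-1)W_{n-3}(t). \]
   Context: Seating model. A circular table has $n\ge 1$ seats, with exactly one napkin between each pair of adjacent seats ($n$ napkins in total). "Left" and "right" are from the perspective of a seated diner. Diners $1,\dots,n$ arrive in this order and a maitre d' chooses a seat for each. A preference order is $\sigma=(\sigma_1,\dots,\sigma_n)\in\{-1,1\}^n$, where $\sigma_j=+1$ means diner $j$ prefers the napkin on their right and $\sigma_j=-1$ the napkin on their left. When diner $j$ is seated, they take their preferred adjacent napkin if it is still on the table; otherwise the other adjacent napkin if still on the table; otherwise they are napkinless. The maitre d' observes which napkin each seated diner takes. The "previous diner" means the most recently seated diner. Algorithm $W$ (trap setting). Seat diner 1; the primary direction $d\in\{\text{left},\text{right}\}$ is the side of the napkin diner 1 takes. All movement below is in direction $d$. (W1) If the two seats at distance 1 and 2 in direction $d$ from the previous diner's seat are both empty, go to W2; otherwise go to W4. (W2) If the previous diner took the napkin on their side $d$, seat the next diner two seats in direction $d$ from the previous diner and return to W1; otherwise go to W3. (W3) Seat the next diner one seat in direction $d$ from the previous diner and return to W1. (W4) Seat all remaining diners, one at a time in order of arrival, in the empty seats, in the order in which these seats are encountered moving in direction $d$ starting from diner 1's seat. $\nu_W(\sigma)$ is the number of napkinless diners when the $n$ diners with preference order $\sigma$ are seated at the circular table with $n$ seats by algorithm $W$, and $W_n(t)=\sum_{\sigma\in\{-1,1\}^n}t^{\nu_W(\sigma)}$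 (so e.g. $W_1(t)=2$, $W_2(t)=4$, $W_3(t)=4+4t$). *)

theory Defs
  imports "HOL-Computational_Algebra.Polynomial"
begin

(* Seats 0..n-1 around the table; "right" of seat s is seat s+1 (mod n).
   Napkin i lies between seat i and seat i+1 (mod n).  So the napkin on the
   right of seat s is napkin s, the one on its left is napkin s-1 (mod n).
   Directions/preferences are encoded as ints: 1 = right, -1 = left. *)

definition mv :: "nat \<Rightarrow> int \<Rightarrow> int \<Rightarrow> nat \<Rightarrow> nat" where
  "mv n d k s = nat ((int s + k * d) mod int n)"

definition napSide :: "nat \<Rightarrow> int \<Rightarrow> nat \<Rightarrow> nat" where
  "napSide n d s = (if d = 1 then s else nat ((int s - 1) mod int n))"

definition grab :: "nat \<Rightarrow> int \<Rightarrow> nat \<Rightarrow> nat set \<Rightarrow> nat option" where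
  "grab n sg s T =
     (if napSide n sg s \<notin> T then Some (napSide n sg s)
      else if napSide n (- sg) s \<notin> T then Some (napSide n (- sg) s)
      else None)"

record wstate =
  occ :: "nat set"
  taken :: "nat set"
  bare :: nat           (* number of napkinless diners so far *)
  prev :: nat
  prevd :: bool         (* previous diner took the napkin on their side d *)
  w4 :: bool

definition seat_diner :: "nat \<Rightarrow> int \<Rightarrow> int \<Rightarrow> nat \<Rightarrow> wstate \<Rightarrow> wstate" where
  "seat_diner n d sg s st =
     (case grab n sg s (taken st) of
        None \<Rightarrow> st\<lparr>occ := insert s (occ st), bare := bare st + 1, prev := s, prevd := False\<rparr>
      | Some p \<Rightarrow> st\<lparr>occ := insert s (occ st), taken := insert p (taken st), prev := s,
                      prevd := (p = napSide n d s)\<rparr>)"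

(* choice of the next seat: steps W1-W3, or W4 (first empty seat met moving in
   direction d from diner 1's seat, which is seat 0) *)
definition next_seat :: "nat \<Rightarrow> int \<Rightarrow> wstate \<Rightarrow> bool \<times> nat" where
  "next_seat n d st =
     (if \<not> w4 st \<and> mv n d 1 (prev st) \<notin> occ st \<and> mv n d 2 (prev st) \<notin> occ st
      then (False, if prevd st then mv n d 2 (prev st) else mv n d 1 (prev st))
      else (True, mv n d (int (LEAST k::nat. mv n d (int k) 0 \<notin> occ st)) 0))"

definition wstep :: "nat \<Rightarrow> int \<Rightarrow> wstate \<Rightarrow> int \<Rightarrow> wstate" where
  "wstep n d st sg = (case next_seat n d st of (f, s) \<Rightarrow> seat_diner n d sg s (st\<lparr>w4 := f\<rparr>))"

(* nu_W(sigma): sigma is the preference list (sigma_1,...,sigma_n), n = length sigma *)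
definition nuW :: "int list \<Rightarrow> nat" where
  "nuW \<sigma> = (case \<sigma> of [] \<Rightarrow> 0
     | d # rest \<Rightarrow>
        (let n = length \<sigma>;
             st0 = \<lparr>occ = {0}, taken = {napSide n d 0}, bare = 0, prev = 0, prevd = True, w4 = False\<rparr>
         in bare (foldl (wstep n d) st0 rest)))"

definition Wpoly :: "nat \<Rightarrow> int poly" where
  "Wpoly n = (\<Sum>\<sigma>\<in>{\<sigma>. length \<sigma> = n \<and> set \<sigma> \<subseteq> {-1, 1}}. monom 1 (nuW \<sigma>))"

end

theory Submission
  imports Defs
begin


definition posn :: "nat \<Rightarrow> int \<Rightarrow> nat \<Rightarrow> nat" where
  "posn n d x = mv n d (int x) 0"
definition ndk :: "nat \<Rightarrow> int \<Rightarrow> nat \<Rightarrow> nat" where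
  "ndk n d x = napSide n d (posn n d x)"

lemma mv_lt: "n > 0 \<Longrightarrow> mv n d k s < n"
  unfolding mv_def by (simp add: nat_less_iff)

lemma mv_mv: assumes "n > 0" shows "mv n d k (mv n d j p) = mv n d (j + k) p"
proof -
  have "int (mv n d j p) = (int p + j * d) mod int n" unfolding mv_def using assms by simp
  then show ?thesis unfolding mv_def
    by (simp add: mod_add_left_eq distrib_right add.assoc)
qed

lemma posn_lt: "n > 0 \<Longrightarrow> posn n d x < n"
  unfolding posn_def by (rule mv_lt)

lemma mv_posn: "n > 0 \<Longrightarrow> mv n d k (posn n d x) = mv n d (int x + k) 0"
  unfolding posn_def by (simp add: mv_mv)

lemma mv_posn1: "n > 0 \<Longrightarrow> mv n d 1 (posn n d x) = posn n d (Suc x)"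
  unfolding posn_def by (simp add: mv_mv add.commute)

lemma mv_posn2: "n > 0 \<Longrightarrow> mv n d 2 (posn n d x) = posn n d (Suc (Suc x))"
  unfolding posn_def by (simp add: mv_mv add.commute)

lemma posn_n: "n > 0 \<Longrightarrow> posn n d (x + n) = posn n d x"
  unfolding posn_def mv_def by (simp add: distrib_right)

lemma posn_0: "posn n d 0 = 0"
  unfolding posn_def mv_def by simp

lemma posn_inj: assumes "d = 1 \<or> d = -1" "n > 0" shows "inj_on (posn n d) {..<n}"
proof
  fix x y assume x: "x \<in> {..<n}" and y: "y \<in> {..<n}" and e: "posn n d x = posn n d y"
  have "(int x * d) mod int n = (int y * d) mod int n"
    using e assms(2) unfolding posn_def mv_def by (simp add: eq_nat_nat_iff)
  then have "int x mod int n = int y mod int n"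
    using assms(1) by (auto dest: mod_minus_cong)
  then show "x = y" using x y by simp
qed

lemma posn_surj: assumes "d = 1 \<or> d = -1" "n > 0" shows "posn n d ` {..<n} = {..<n}"
  using posn_inj[OF assms] posn_lt[OF assms(2)]
  by (intro endo_inj_surj) auto

lemma napSide_neg_posn: assumes "d = 1 \<or> d = -1" "n > 0"
  shows "napSide n (-d) (posn n d x) = ndk n d (x + n - 1)"
  using assms(1)
proof (elim disjE)
  assume d: "d = 1"
  have i1: "int (x + n - 1) = int x - 1 + int n" using assms(2) by simp
  have "(int (x mod n) - 1) mod int n = (int x - 1) mod int n"
    by (simp add: of_nat_mod mod_diff_left_eq)
  also have "... = int (x + n - 1) mod int n" unfolding i1 by simp
  finally have e: "(int (x mod n) - 1) mod int n = int (x + n - 1) mod int n" .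
  have l: "napSide n (-d) (posn n d x) = nat ((int (x mod n) - 1) mod int n)"
    using d assms(2) unfolding napSide_def posn_def mv_def by (simp add: of_nat_mod)
  have r: "ndk n d (x + n - 1) = nat (int (x + n - 1) mod int n)"
    using d unfolding ndk_def napSide_def posn_def mv_def by simp
  show ?thesis using l r e by simp
next
  assume d: "d = -1"
  have i1: "- int (x + n - 1) = - int x + 1 - int n" using assms(2) by simp
  have "(int (nat ((- int (x + n - 1)) mod int n)) - 1) mod int n
      = ((- int (x + n - 1)) mod int n - 1) mod int n" using assms(2) by simp
  also have "... = (- int (x + n - 1) - 1) mod int n" by (simp add: mod_diff_left_eq)
  also have "... = (- int x + (-1) * int n) mod int n" unfolding i1 by (simp add: algebra_simps)
  also have "... = (- int x) mod int n" by (rule mod_mult_self1)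
  finally have e: "(int (nat ((- int (x + n - 1)) mod int n)) - 1) mod int n = (- int x) mod int n" .
  have l: "napSide n (-d) (posn n d x) = nat ((- int x) mod int n)"
    using d unfolding napSide_def posn_def mv_def by simp
  have r: "ndk n d (x + n - 1) = nat ((int (nat ((- int (x + n - 1)) mod int n)) - 1) mod int n)"
    using d unfolding ndk_def napSide_def posn_def mv_def by simp
  show ?thesis using l r e by simp
qed




definition pr1 :: "nat \<Rightarrow> nat \<Rightarrow> nat" where "pr1 n s = nat ((int s - 1) mod int n)"

definition napk :: "nat \<Rightarrow> nat \<Rightarrow> nat set" where "napk n s = {s, pr1 n s}"

lemma napSide_simps: "napSide n 1 s = s" "napSide n (-1) s = pr1 n s"
  unfolding napSide_def pr1_def by auto

lemma pr1_lt: "n > 0 \<Longrightarrow> pr1 n s < n"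
  unfolding pr1_def by (simp add: nat_less_iff)

lemma pr1_inj: assumes "n > 0" "e < n" "s < n" "pr1 n e = pr1 n s" shows "e = s"
proof -
  have "(int e - 1) mod int n = (int s - 1) mod int n"
    using assms(1,4) unfolding pr1_def by (simp add: eq_nat_nat_iff)
  then have "((int e - 1) mod int n + 1) mod int n = ((int s - 1) mod int n + 1) mod int n" by simp
  then have "int e mod int n = int s mod int n" by (simp add: mod_add_left_eq)
  then show ?thesis using assms by simp
qed

lemma adj: assumes "n > 0" "e < n" "s < n" "e = pr1 n s" "d = 1 \<or> d = -1"
  shows "mv n d 1 e = s \<or> mv n d 1 s = e"
  using assms(5)
proof (elim disjE)
  assume d: "d = 1"
  have "s = nat ((int e + 1) mod int n)"
  proof (cases "s = 0")
    case True
    then have "(int s - 1) mod int n = int n - 1" using assms(1) by (simp add: zmod_minus1)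
    then have "e = n - 1" using assms(4) unfolding pr1_def by simp
    then show ?thesis using True assms(1) by simp
  next
    case False
    then have "(int s - 1) mod int n = int s - 1" using assms(3) by simp
    then have "e = s - 1" using assms(4) False unfolding pr1_def by simp
    then show ?thesis using False assms(3) by simp
  qed
  then show ?thesis using d unfolding mv_def by simp
next
  assume d: "d = -1"
  show ?thesis using d assms(4) unfolding mv_def pr1_def by simp
qed

lemma grab_None: "a = 1 \<or> a = -1 \<Longrightarrow> grab n a s T = None \<longleftrightarrow> napk n s \<subseteq> T"
  unfolding grab_def napk_def by (auto simp: napSide_simps)

lemma grab_Some: "a = 1 \<or> a = -1 \<Longrightarrow> grab n a s T = Some p \<Longrightarrow> p \<in> napk n s"
  unfolding grab_def napk_def by (auto simp: napSide_simps split: if_splits)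

lemma napk_disj: assumes "n > 0" "d = 1 \<or> d = -1" "e < n" "s < n" "e \<noteq> s"
  "mv n d 1 e \<noteq> s" "mv n d 1 s \<noteq> e"
  shows "napk n e \<inter> napk n s = {}"
proof -
  have "e \<noteq> pr1 n s" using adj[OF assms(1,3,4) _ assms(2)] assms(6,7) by blast
  moreover have "s \<noteq> pr1 n e" using adj[OF assms(1,4,3) _ assms(2)] assms(6,7) by blast
  moreover have "pr1 n e \<noteq> pr1 n s" using pr1_inj assms by blast
  ultimately show ?thesis using assms(5) unfolding napk_def by auto
qed

lemma seat_diner_facts:
  assumes "a = 1 \<or> a = -1"
  shows "occ (seat_diner n d a s st) = insert s (occ st)"
    "bare (seat_diner n d a s st) = bare st + (if napk n s \<subseteq> taken st then 1 else 0)"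
    "taken st \<subseteq> taken (seat_diner n d a s st)"
    "taken (seat_diner n d a s st) \<subseteq> taken st \<union> napk n s"
  using grab_None[OF assms, of n s "taken st"] grab_Some[OF assms, of n s "taken st"]
  unfolding seat_diner_def by (auto split: option.splits)

lemma w4_main:
  assumes "n > 0" "d = 1 \<or> d = -1"
  shows "set rest \<subseteq> {-1,1} \<Longrightarrow> occ st \<subseteq> {..<n} \<Longrightarrow> card ({..<n} - occ st) = length rest \<Longrightarrow>
    (\<forall>e\<in>{..<n} - occ st. mv n d 1 e \<in> occ st) \<Longrightarrow>
    bare (foldl (wstep n d) st rest) = bare st + card {e \<in> {..<n} - occ st. napk n e \<subseteq> taken st}"
proof (induction rest arbitrary: st)
  case Nil
  then show ?case by simp
next
  case (Cons a rest)
  define E where "E = {..<n} - occ st"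
  have a: "a = 1 \<or> a = -1" using Cons.prems(1) by auto
  have "E \<noteq> {}" using Cons.prems(3) unfolding E_def by (intro notI) simp
  then obtain e0 where e0: "e0 \<in> E" by auto
  then obtain k0 where k0: "posn n d k0 \<notin> occ st" using posn_surj[OF assms(2,1)] unfolding E_def
    by (metis DiffD1 DiffD2 imageE)
  define s where "s = posn n d (LEAST k. posn n d k \<notin> occ st)"
  have sE: "s \<in> E" unfolding s_def E_def using LeastI[of "\<lambda>k. posn n d k \<notin> occ st", OF k0]
    posn_lt[OF assms(1)] by auto
  have cond: "\<not> (mv n d 1 (prev st) \<notin> occ st \<and> mv n d 2 (prev st) \<notin> occ st)"
  proof
    assume h: "mv n d 1 (prev st) \<notin> occ st \<and> mv n d 2 (prev st) \<notin> occ st"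
    then have "mv n d 1 (prev st) \<in> {..<n} - occ st" using mv_lt[OF assms(1)] by auto
    then have "mv n d 1 (mv n d 1 (prev st)) \<in> occ st" using Cons.prems(4) by blast
    then show False using h mv_mv[OF assms(1)] by simp
  qed
  have ns: "next_seat n d st = (True, s)"
    unfolding next_seat_def s_def posn_def using cond by auto
  define st1 where "st1 = seat_diner n d a s (st\<lparr>w4 := True\<rparr>)"
  have step: "wstep n d st a = st1" unfolding wstep_def st1_def ns by simp
  note f = seat_diner_facts[OF a, where n=n and d=d and s=s and st="st\<lparr>w4 := True\<rparr>", folded st1_def, simplified]
  have occ1: "{..<n} - occ st1 = E - {s}" using f(1) unfolding E_def by auto
  have c1: "card ({..<n} - occ st1) = length rest"
    unfolding occ1 using sE Cons.prems(3) unfolding E_def by (simp add: card_Diff_singleton)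
  have "bare (foldl (wstep n d) st1 rest) = bare st1 + card {e \<in> {..<n} - occ st1. napk n e \<subseteq> taken st1}"
  proof (rule Cons.IH)
    show "set rest \<subseteq> {-1,1}" using Cons.prems(1) by simp
    show "occ st1 \<subseteq> {..<n}" using f(1) Cons.prems(2) sE unfolding E_def by auto
    show "card ({..<n} - occ st1) = length rest" by (rule c1)
    show "\<forall>e\<in>{..<n} - occ st1. mv n d 1 e \<in> occ st1"
      using Cons.prems(4) f(1) unfolding occ1 E_def by auto
  qed
  then have IH: "bare (foldl (wstep n d) st1 rest) = bare st1 + card {e \<in> E - {s}. napk n e \<subseteq> taken st1}"
    unfolding occ1 .
  have same: "napk n e \<subseteq> taken st1 \<longleftrightarrow> napk n e \<subseteq> taken st" if "e \<in> E - {s}" for e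
  proof -
    have "napk n e \<inter> napk n s = {}"
      apply (rule napk_disj[OF assms(1,2)])
      using that sE Cons.prems(4) unfolding E_def by auto
    then show ?thesis using f(3,4) by blast
  qed
  have fin: "finite E" unfolding E_def by simp
  have "card {e \<in> E. napk n e \<subseteq> taken st} =
     card {e \<in> E - {s}. napk n e \<subseteq> taken st1} + (if napk n s \<subseteq> taken st then 1 else 0)"
  proof -
    have eqs: "{e \<in> E - {s}. napk n e \<subseteq> taken st1} = {e \<in> E - {s}. napk n e \<subseteq> taken st}"
      using same by auto
    have "{e \<in> E. napk n e \<subseteq> taken st} = (if napk n s \<subseteq> taken st then insert s else id) {e \<in> E - {s}. napk n e \<subseteq> taken st}"
      using sE by auto
    then show ?thesis unfolding eqs using fin by auto
  qed
  then show ?case using IH step f(2) unfolding E_def by simp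
qed



definition Lset :: "nat \<Rightarrow> int list set" where
  "Lset m = {\<sigma>. length \<sigma> = m \<and> set \<sigma> \<subseteq> {-1, 1}}"

lemma Lset_finite: "finite (Lset m)"
  using finite_lists_length_eq[of "{-1::int,1}" m] unfolding Lset_def by (simp add: conj_commute)

lemma Lset_card: "card (Lset m) = 2 ^ m"
  using card_lists_length_eq[of "{-1::int,1}" m] unfolding Lset_def by (simp add: conj_commute numeral_2_eq_2)

lemma Lset_Suc: "Lset (Suc m) = (\<lambda>(a, l). a # l) ` ({-1, 1} \<times> Lset m)"
proof
  show "Lset (Suc m) \<subseteq> (\<lambda>(a, l). a # l) ` ({-1, 1} \<times> Lset m)"
  proof
    fix \<sigma> assume "\<sigma> \<in> Lset (Suc m)"
    then obtain a l where "\<sigma> = a # l" "length l = m" "a \<in> {-1,1}" "set l \<subseteq> {-1,1}"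
      unfolding Lset_def by (cases \<sigma>) auto
    then show "\<sigma> \<in> (\<lambda>(a, l). a # l) ` ({-1, 1} \<times> Lset m)" unfolding Lset_def by force
  qed
qed (auto simp: Lset_def)

lemma sum_Lset_Suc:
  "(\<Sum>\<sigma>\<in>Lset (Suc m). h \<sigma>) = (\<Sum>a\<in>{-1,1}. \<Sum>l\<in>Lset m. h (a # l))"
proof -
  have inj: "inj_on (\<lambda>(a, l). a # l) ({-1::int, 1} \<times> Lset m)" by (auto simp: inj_on_def)
  have "(\<Sum>\<sigma>\<in>Lset (Suc m). h \<sigma>) = (\<Sum>p\<in>{-1::int, 1} \<times> Lset m. h (fst p # snd p))"
    unfolding Lset_Suc by (subst sum.reindex[OF inj]) (simp add: case_prod_beta)
  also have "... = (\<Sum>a\<in>{-1,1}. \<Sum>l\<in>Lset m. h (a # l))"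
    by (simp add: sum.cartesian_product')
  finally show ?thesis .
qed

lemma sum_pm: "d = 1 \<or> d = -1 \<Longrightarrow> (\<Sum>a\<in>{-1::int,1}. h a) = h d + h (-d)"
  by (auto simp: add.commute)

definition SS :: "nat \<Rightarrow> int \<Rightarrow> wstate \<Rightarrow> nat \<Rightarrow> int poly" where
  "SS n d st m = (\<Sum>l\<in>Lset m. monom 1 (bare (foldl (wstep n d) st l)))"

lemma SS_Suc: "SS n d st (Suc m) = (\<Sum>a\<in>{-1,1}. SS n d (wstep n d st a) m)"
  unfolding SS_def sum_Lset_Suc by simp

lemma SS_w4:
  assumes "n > 0" "d = 1 \<or> d = -1" "occ st \<subseteq> {..<n}" "card ({..<n} - occ st) = m"
    "\<forall>e\<in>{..<n} - occ st. mv n d 1 e \<in> occ st"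
  shows "SS n d st m = 2 ^ m * monom 1 (bare st + card {e \<in> {..<n} - occ st. napk n e \<subseteq> taken st})"
proof -
  have "SS n d st m = (\<Sum>l\<in>Lset m. monom 1 (bare st + card {e \<in> {..<n} - occ st. napk n e \<subseteq> taken st}))"
    unfolding SS_def
    apply (rule sum.cong[OF refl])
    apply (subst w4_main[OF assms(1,2)])
    using assms unfolding Lset_def by auto
  then show ?thesis by (simp add: Lset_card)
qed



lemma ndk_n: "n > 0 \<Longrightarrow> ndk n d (x + n) = ndk n d x"
  unfolding ndk_def by (simp add: posn_n)

lemma napSide_inj: assumes "d = 1 \<or> d = -1" "n > 0" shows "inj_on (napSide n d) {..<n}"
  using assms(1)
proof (elim disjE)
  assume "d = 1" then show ?thesis by (simp add: napSide_simps inj_on_def)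
next
  assume "d = -1" then show ?thesis using pr1_inj[OF assms(2)] by (simp add: napSide_simps inj_on_def)
qed

lemma ndk_inj: assumes "d = 1 \<or> d = -1" "n > 0" shows "inj_on (ndk n d) {..<n}"
proof -
  have "inj_on (napSide n d \<circ> posn n d) {..<n}"
    apply (rule comp_inj_on[OF posn_inj[OF assms]])
    apply (rule inj_on_subset[OF napSide_inj[OF assms]])
    using posn_lt[OF assms(2)] by auto
  then show ?thesis unfolding ndk_def comp_def by simp
qed

lemma ndk_eq_iff: assumes "d = 1 \<or> d = -1" "n > 0" "x < n" "N \<subseteq> {..<n}"
  shows "ndk n d x \<in> ndk n d ` N \<longleftrightarrow> x \<in> N"
  using ndk_inj[OF assms(1,2)] assms(3,4) by (auto simp: inj_on_def)

lemma napk_posn: assumes "d = 1 \<or> d = -1" "n > 0"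
  shows "napk n (posn n d h) = {ndk n d h, ndk n d (h + n - 1)}"
proof -
  have "napk n (posn n d h) = {napSide n d (posn n d h), napSide n (-d) (posn n d h)}"
    using assms(1) unfolding napk_def by (auto simp: napSide_simps)
  then show ?thesis using napSide_neg_posn[OF assms] unfolding ndk_def by simp
qed

fun g :: "nat \<Rightarrow> bool \<Rightarrow> int poly" where
  "g 0 s = 1"
| "g (Suc 0) s = 2"
| "g (Suc (Suc r)) True = 2 * g r True + 2 * [:0, 1:] * g r False"
| "g (Suc (Suc r)) False = g (Suc r) True + g (Suc r) False"

definition Cnt :: "nat set \<Rightarrow> nat set \<Rightarrow> nat \<Rightarrow> nat" where
  "Cnt X N x = card {h. h < x \<and> h \<notin> X \<and> h \<in> N \<and> h - 1 \<in> N}"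

definition trap :: "nat \<Rightarrow> int \<Rightarrow> wstate \<Rightarrow> nat \<Rightarrow> bool \<Rightarrow> nat set \<Rightarrow> nat set \<Rightarrow> bool" where
  "trap n d st x s X N \<longleftrightarrow>
     x < n \<and> X \<subseteq> {..x} \<and> 0 \<in> X \<and> x \<in> X \<and> (\<forall>h<x. h \<in> X \<or> Suc h \<in> X) \<and>
     N \<subseteq> {..x} \<and> (x \<in> N \<longleftrightarrow> s) \<and>
     occ st = posn n d ` X \<and> taken st = ndk n d ` N \<and> prev st = posn n d x \<and>
     prevd st = s \<and> \<not> w4 st \<and> bare st = 0"

lemma trap_end:
  assumes "n > 0" "d = 1 \<or> d = -1" "trap n d st x s X N" "n \<le> x + 2"
  shows "SS n d st (n - card X) = 2 ^ (n - card X) * monom 1 (Cnt X N x)"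
proof -
  have T: "x < n" "X \<subseteq> {..x}" "0 \<in> X" "x \<in> X" "\<forall>h<x. h \<in> X \<or> Suc h \<in> X"
     "N \<subseteq> {..x}" "occ st = posn n d ` X" "taken st = ndk n d ` N" "bare st = 0"
    using assms(3) unfolding trap_def by auto
  have Xn: "X \<subseteq> {..<n}" "N \<subseteq> {..<n}" using T by auto
  have pinj: "inj_on (posn n d) {..<n}" by (rule posn_inj[OF assms(2,1)])
  have E: "{..<n} - occ st = posn n d ` ({..<n} - X)"
    unfolding T(7) using posn_surj[OF assms(2,1)] inj_on_image_set_diff[OF pinj _ Xn(1)]
    by simp
  have cardE: "card ({..<n} - occ st) = n - card X"
    unfolding E using card_image[OF inj_on_subset[OF pinj, of "{..<n} - X"]] Xn(1)
    by (simp add: card_Diff_subset finite_subset)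
  have iso: "\<forall>e\<in>{..<n} - occ st. mv n d 1 e \<in> occ st"
  proof
    fix e assume "e \<in> {..<n} - occ st"
    then obtain h where h: "h < n" "h \<notin> X" "e = posn n d h" unfolding E by auto
    have "mv n d 1 e = posn n d (Suc h)" using h(3) mv_posn1[OF assms(1)] by simp
    moreover have "posn n d (Suc h) \<in> occ st"
    proof (cases "h < x")
      case True then show ?thesis using T(5) h(2) T(7) by auto
    next
      case False
      then have "Suc h = 0 + n" using h T(4) assms(4) by (cases "h = x") auto
      then have "posn n d (Suc h) = posn n d 0" using posn_n[OF assms(1)] by metis
      then show ?thesis using T(3,7) by auto
    qed
    ultimately show "mv n d 1 e \<in> occ st" by simp
  qed
  have occn: "occ st \<subseteq> {..<n}" unfolding T(7) using posn_lt[OF assms(1)] by auto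
  have cnt: "{e \<in> {..<n} - occ st. napk n e \<subseteq> taken st} =
      posn n d ` {h. h < x \<and> h \<notin> X \<and> h \<in> N \<and> h - 1 \<in> N}"
  proof -
    have key: "napk n (posn n d h) \<subseteq> taken st \<longleftrightarrow> h \<in> N \<and> h - 1 \<in> N"
      if "h < n" "h \<notin> X" for h
    proof -
      have h0: "h \<noteq> 0" using that T(3) by (metis)
      have "ndk n d (h + n - 1) = ndk n d (h - 1)"
        using ndk_n[OF assms(1), of d "h - 1"] h0 by (simp add: add.commute)
      then have "napk n (posn n d h) = {ndk n d h, ndk n d (h - 1)}"
        using napk_posn[OF assms(2,1)] by simp
      then show ?thesis unfolding T(8) using ndk_eq_iff[OF assms(2,1) _ Xn(2)] that by auto
    qed
    have "{e \<in> {..<n} - occ st. napk n e \<subseteq> taken st} = posn n d ` {h \<in> {..<n} - X. h \<in> N \<and> h - 1 \<in> N}"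
      unfolding E using key by auto
    also have "{h \<in> {..<n} - X. h \<in> N \<and> h - 1 \<in> N} = {h. h < x \<and> h \<notin> X \<and> h \<in> N \<and> h - 1 \<in> N}"
    proof -
      have "h < x" if "h \<in> N" "h \<notin> X" for h
        using that T(4,6) by (cases "h = x") auto
      then show ?thesis using T(1) by (auto dest: less_trans)
    qed
    finally show ?thesis .
  qed
  have "card {e \<in> {..<n} - occ st. napk n e \<subseteq> taken st} = Cnt X N x"
    unfolding cnt Cnt_def
    apply (rule card_image)
    apply (rule inj_on_subset[OF pinj])
    using T(1) by auto
  then show ?thesis using SS_w4[OF assms(1,2) occn cardE iso] T(9) by simp
qed



lemma trap_step:
  assumes n0: "n > 0" and d: "d = 1 \<or> d = -1" and tr: "trap n d st x s X N" and x3: "x + 3 \<le> n"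
    and a: "a = 1 \<or> a = -1"
  defines "y \<equiv> if s then Suc (Suc x) else Suc x"
  defines "q \<equiv> if a = d then y else y - 1"
  shows "trap n d (wstep n d st a) y (a = d) (insert y X) (insert q N)"
    and "Cnt (insert y X) (insert q N) y = Cnt X N x + (if s \<and> a \<noteq> d then 1 else 0)"
    and "y \<notin> X"
proof -
  have T: "x < n" "X \<subseteq> {..x}" "0 \<in> X" "x \<in> X" "\<forall>h<x. h \<in> X \<or> Suc h \<in> X"
     "N \<subseteq> {..x}" "x \<in> N \<longleftrightarrow> s" "occ st = posn n d ` X" "taken st = ndk n d ` N"
     "prev st = posn n d x" "prevd st = s" "\<not> w4 st" "bare st = 0"
    using tr unfolding trap_def by auto
  have Xn: "X \<subseteq> {..<n}" "N \<subseteq> {..<n}" using T by auto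
  have pinj: "inj_on (posn n d) {..<n}" by (rule posn_inj[OF d n0])
  have yn: "y < n" "x < y" "y \<le> Suc (Suc x)" using x3 unfolding y_def by auto
  show yX: "y \<notin> X" using T(2) yn by auto
  have yN: "y \<notin> N" using T(6) yn by auto
  have notin: "posn n d z \<notin> occ st" if "x < z" "z < n" for z
  proof
    assume "posn n d z \<in> occ st"
    then obtain w where "w \<in> X" "posn n d w = posn n d z" using T(8) by auto
    then have "w = z" using pinj Xn(1) that by (auto simp: inj_on_def)
    then show False using \<open>w \<in> X\<close> T(2) that by auto
  qed
  have ns: "next_seat n d st = (False, posn n d y)"
    unfolding next_seat_def T(10) T(11) mv_posn1[OF n0] mv_posn2[OF n0]
    using notin[of "Suc x"] notin[of "Suc (Suc x)"] x3 T(12) unfolding y_def by auto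
  have qN: "q \<notin> N" "q < n" "q \<le> y"
  proof -
    have "y - 1 \<notin> N" using T(6,7) yN unfolding y_def by (cases s) auto
    then show "q \<notin> N" using yN unfolding q_def by auto
    show "q < n" "q \<le> y" using yn unfolding q_def by auto
  qed
  have nap: "napSide n a (posn n d y) = ndk n d q"
  proof (cases "a = d")
    case True then show ?thesis unfolding q_def ndk_def by simp
  next
    case False
    then have "a = - d" using a d by auto
    then have "napSide n a (posn n d y) = ndk n d (y - 1 + n)"
      using napSide_neg_posn[OF d n0, of y] yn by simp
    then show ?thesis using ndk_n[OF n0] False unfolding q_def by simp
  qed
  have gr: "grab n a (posn n d y) (taken st) = Some (ndk n d q)"
    unfolding grab_def nap T(9) using ndk_eq_iff[OF d n0 qN(2) Xn(2)] qN(1) by simp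
  have pd: "(ndk n d q = napSide n d (posn n d y)) \<longleftrightarrow> a = d"
  proof -
    have "ndk n d q = ndk n d y \<longleftrightarrow> q = y"
      using ndk_inj[OF d n0] qN(2) yn(1) by (auto simp: inj_on_def)
    moreover have "q = y \<longleftrightarrow> a = d" unfolding q_def using yn by auto
    ultimately show ?thesis unfolding ndk_def by simp
  qed
  define st' where "st' = wstep n d st a"
  have st': "occ st' = insert (posn n d y) (occ st)" "taken st' = insert (ndk n d q) (taken st)"
    "prev st' = posn n d y" "prevd st' = (a = d)" "w4 st' = False" "bare st' = bare st"
    unfolding st'_def wstep_def ns seat_diner_def using gr pd by auto
  show "trap n d (wstep n d st a) y (a = d) (insert y X) (insert q N)"
    unfolding trap_def st'_def[symmetric] st' T(8,9,13)
  proof (intro conjI)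
    show "\<forall>h<y. h \<in> insert y X \<or> Suc h \<in> insert y X"
      using T(4,5) unfolding y_def by (auto simp: less_Suc_eq)
    show "insert q N \<subseteq> {..y}" using T(6) qN(3) yn by auto
    show "(y \<in> insert q N) = (a = d)" using yN unfolding q_def using yn by auto
  qed (use yn T in auto)
  show "Cnt (insert y X) (insert q N) y = Cnt X N x + (if s \<and> a \<noteq> d then 1 else 0)"
  proof (cases s)
    case False
    then have y: "y = Suc x" unfolding y_def by simp
    have "{h. h < y \<and> h \<notin> insert y X \<and> h \<in> insert q N \<and> h - 1 \<in> insert q N}
        = {h. h < x \<and> h \<notin> X \<and> h \<in> N \<and> h - 1 \<in> N}"
    proof -
      have "x \<le> q" unfolding q_def y by auto
      then show ?thesis using T(4) unfolding y by (auto simp: less_Suc_eq)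
    qed
    then show ?thesis unfolding Cnt_def using False by simp
  next
    case True
    then have y: "y = Suc (Suc x)" unfolding y_def by simp
    have xN: "x \<in> N" using T(7) True by simp
    have "{h. h < y \<and> h \<notin> insert y X \<and> h \<in> insert q N \<and> h - 1 \<in> insert q N}
        = {h. h < x \<and> h \<notin> X \<and> h \<in> N \<and> h - 1 \<in> N} \<union> (if a \<noteq> d then {Suc x} else {})"
    proof -
      have q1: "q = Suc x \<longleftrightarrow> a \<noteq> d" unfolding q_def y by auto
      have "x \<le> Suc x" by simp
      have sx: "Suc x \<notin> X" "Suc x \<notin> N" using T(2,6) by auto
      have qx: "x < q" unfolding q_def y by auto
      show ?thesis
      proof (intro set_eqI iffI)
        fix h assume h: "h \<in> {h. h < y \<and> h \<notin> insert y X \<and> h \<in> insert q N \<and> h - 1 \<in> insert q N}"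
        then have "h < x \<or> h = Suc x" using T(4) unfolding y by (auto simp: less_Suc_eq)
        then show "h \<in> {h. h < x \<and> h \<notin> X \<and> h \<in> N \<and> h - 1 \<in> N} \<union> (if a \<noteq> d then {Suc x} else {})"
        proof
          assume "h < x" then show ?thesis using h qx by auto
        next
          assume "h = Suc x" then show ?thesis using h q1 sx by auto
        qed
      next
        fix h assume h: "h \<in> {h. h < x \<and> h \<notin> X \<and> h \<in> N \<and> h - 1 \<in> N} \<union> (if a \<noteq> d then {Suc x} else {})"
        then show "h \<in> {h. h < y \<and> h \<notin> insert y X \<and> h \<in> insert q N \<and> h - 1 \<in> insert q N}"
          using q1 sx xN unfolding y by (auto split: if_splits)
      qed
    qed
    moreover have "finite {h. h < x \<and> h \<notin> X \<and> h \<in> N \<and> h - 1 \<in> N}" by simp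
    ultimately show ?thesis unfolding Cnt_def using True by auto
  qed
qed



lemma monom_Suc_mult: "monom (1::int) (Suc c) = [:0, 1:] * monom 1 c"
  by (simp add: monom_Suc)

lemma alg1: "monom (1::int) C * 2 ^ Suc e * g r True + monom 1 (Suc C) * 2 ^ Suc e * g r False
   = monom 1 C * 2 ^ e * g (Suc (Suc r)) True"
proof -
  have "monom (1::int) C * 2 ^ Suc e * g r True + monom 1 (Suc C) * 2 ^ Suc e * g r False
     = monom 1 C * 2 ^ e * (2 * g r True + 2 * [:0, 1:] * g r False)"
    unfolding monom_Suc_mult power_Suc by (simp only: distrib_left mult.assoc mult.left_commute)
  then show ?thesis by simp
qed
lemma alg2: "monom (1::int) C * 2 ^ e * g (Suc r) True + monom 1 C * 2 ^ e * g (Suc r) False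
   = monom 1 C * 2 ^ e * g (Suc (Suc r)) False"
  by (simp add: distrib_left)

lemma trap_card: "trap n d st x s X N \<Longrightarrow> card X \<le> Suc x"
  unfolding trap_def using card_mono[of "{..x}" X] by auto

lemma trap_main:
  assumes n0: "n > 0" and d: "d = 1 \<or> d = -1"
  shows "trap n d st x s X N \<Longrightarrow>
    SS n d st (n - card X) = monom 1 (Cnt X N x) * 2 ^ (Suc x - card X) * g (n - 1 - x) s"
proof (induction "n - 1 - x" arbitrary: st x s X N rule: less_induct)
  case less
  have cX: "card X \<le> Suc x" by (rule trap_card[OF less.prems])
  have xn: "x < n" using less.prems unfolding trap_def by auto
  show ?case
  proof (cases "n \<le> x + 2")
    case True
    note te = trap_end[OF n0 d less.prems True]
    show ?thesis
    proof (cases "x = n - 1")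
      case True
      then have "n - card X = Suc x - card X" using xn by simp
      then show ?thesis using te True by simp
    next
      case False
      then have x2: "x = n - 2" "n - 1 - x = Suc 0" using xn \<open>n \<le> x + 2\<close> by auto
      then have "n - card X = Suc (Suc x - card X)" using xn cX by simp
      then show ?thesis using te x2 by simp
    qed
  next
    case False
    then have x3: "x + 3 \<le> n" by simp
    define m where "m = n - card X - 1"
    have mS: "n - card X = Suc m" unfolding m_def using cX x3 by simp
    define y where "y = (if s then Suc (Suc x) else Suc x)"
    have dm: "-d = 1 \<or> -d = -1" using d by auto
    have dd: "(-d = d) = False" using d by auto
    note s1 = trap_step[OF n0 d less.prems x3 d, folded y_def, simplified]
    note s2 = trap_step[OF n0 d less.prems x3 dm, folded y_def, unfolded dd, simplified]
    have cY: "card (insert y X) = Suc (card X)"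
      using s1(3) less.prems unfolding trap_def by (simp add: finite_subset[of X "{..x}"])
    have mY: "n - card (insert y X) = m" using mS cY by simp
    have yx: "x < y" "y < n" using x3 unfolding y_def by auto
    have lt: "n - 1 - y < n - 1 - x" using yx by simp
    have IH1: "SS n d (wstep n d st d) m = monom 1 (Cnt (insert y X) (insert y N) y) * 2 ^ (Suc y - card (insert y X)) * g (n - 1 - y) True"
      using less.hyps[OF lt s1(1)] mY by simp
    have IH2: "SS n d (wstep n d st (-d)) m = monom 1 (Cnt (insert y X) (insert (y - 1) N) y) * 2 ^ (Suc y - card (insert y X)) * g (n - 1 - y) False"
      using less.hyps[OF lt s2(1)] mY by simp
    have SSx: "SS n d st (n - card X) = SS n d (wstep n d st d) m + SS n d (wstep n d st (-d)) m"
      unfolding mS SS_Suc using sum_pm[OF d] by simp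
    define C where "C = Cnt X N x"
    define e where "e = Suc x - card X"
    show ?thesis
    proof (cases s)
      case True
      then have y: "y = Suc (Suc x)" unfolding y_def by simp
      define r where "r = n - 3 - x"
      have r: "n - 1 - x = Suc (Suc r)" "n - 1 - y = r" using x3 y unfolding r_def by linarith+
      have ex: "Suc y - card (insert y X) = Suc e" unfolding e_def using cY y cX by simp
      have c1: "Cnt (insert y X) (insert y N) y = C" using s1(2) True unfolding C_def by simp
      have c2: "Cnt (insert y X) (insert (y - 1) N) y = Suc C" using s2(2) True dd unfolding C_def by simp
      show ?thesis unfolding SSx IH1 IH2 ex c1 c2 r C_def[symmetric] e_def[symmetric]
        using True alg1[of C e r] by simp
    next
      case False
      then have y: "y = Suc x" unfolding y_def by simp
      define r where "r = n - 3 - x"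
      have r: "n - 1 - x = Suc (Suc r)" "n - 1 - y = Suc r" using x3 y unfolding r_def by linarith+
      have ex: "Suc y - card (insert y X) = e" unfolding e_def using cY y cX by simp
      have c1: "Cnt (insert y X) (insert y N) y = C" using s1(2) False unfolding C_def by simp
      have c2: "Cnt (insert y X) (insert (y - 1) N) y = C" using s2(2) False unfolding C_def by simp
      show ?thesis unfolding SSx IH1 IH2 ex c1 c2 r C_def[symmetric] e_def[symmetric]
        using False alg2[of C e r] by simp
    qed
  qed
qed



lemma gF: "g (Suc r) False = g r True + g r False"
  by (cases r) simp_all

lemma pX: "[:-1, 1:] = [:0, 1:] - (1::int poly)"
  by (simp add: one_pCons)

lemma g_rec: "g (Suc (Suc (Suc r))) True = g (Suc (Suc r)) True + 2 * g (Suc r) True + 2 * [:-1, 1:] * g r True"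
proof -
  have "g (Suc (Suc (Suc r))) True = 2 * g (Suc r) True + 2 * [:0, 1:] * (g r True + g r False)"
    by (simp add: gF)
  moreover have "g (Suc (Suc r)) True = 2 * g r True + 2 * [:0, 1:] * g r False" by simp
  ultimately show ?thesis unfolding pX by (simp add: algebra_simps)
qed

definition st0 :: "nat \<Rightarrow> int \<Rightarrow> wstate" where
  "st0 n d = \<lparr>occ = {0}, taken = {napSide n d 0}, bare = 0, prev = 0, prevd = True, w4 = False\<rparr>"

lemma Wpoly_SS: "Wpoly (Suc m) = (\<Sum>d\<in>{-1,1}. SS (Suc m) d (st0 (Suc m) d) m)"
proof -
  have "Wpoly (Suc m) = (\<Sum>\<sigma>\<in>Lset (Suc m). monom 1 (nuW \<sigma>))"
    unfolding Wpoly_def Lset_def by simp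
  also have "... = (\<Sum>d\<in>{-1,1}. \<Sum>l\<in>Lset m. monom 1 (nuW (d # l)))"
    by (rule sum_Lset_Suc)
  also have "... = (\<Sum>d\<in>{-1,1}. SS (Suc m) d (st0 (Suc m) d) m)"
    unfolding SS_def
    apply (rule sum.cong[OF refl])
    apply (rule sum.cong[OF refl])
    unfolding Lset_def nuW_def st0_def by simp
  finally show ?thesis .
qed

lemma SS_st0: assumes "n > 0" "d = 1 \<or> d = -1"
  shows "SS n d (st0 n d) (n - 1) = g (n - 1) True"
proof -
  have tr: "trap n d (st0 n d) 0 True {0} {0}"
    unfolding trap_def st0_def ndk_def using assms(1) by (simp add: posn_0)
  have "Cnt {0} {0} 0 = 0" unfolding Cnt_def by simp
  then show ?thesis using trap_main[OF assms tr] by simp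
qed

lemma Wpoly_g: "n > 0 \<Longrightarrow> Wpoly n = 2 * g (n - 1) True"
proof -
  assume n: "n > 0"
  then obtain m where m: "n = Suc m" by (cases n) auto
  have "Wpoly n = (\<Sum>d\<in>{-1,1}. SS n d (st0 n d) (n - 1))" unfolding m Wpoly_SS by simp
  also have "... = (\<Sum>d\<in>{-1::int,1}. g (n - 1) True)"
    by (rule sum.cong[OF refl]) (use SS_st0[OF n] in auto)
  finally show ?thesis by simp
qed

theorem proposition2:
  fixes n :: nat
  assumes "n \<ge> 4"
  shows "Wpoly n = Wpoly (n - 1) + 2 * Wpoly (n - 2) + 2 * [:-1, 1:] * Wpoly (n - 3)"
proof -
  define r where "r = n - 4"
  have r: "n = Suc (Suc (Suc (Suc r)))" using assms unfolding r_def by simp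
  have w: "Wpoly n = 2 * g (Suc (Suc (Suc r))) True" "Wpoly (n - 1) = 2 * g (Suc (Suc r)) True"
    "Wpoly (n - 2) = 2 * g (Suc r) True" "Wpoly (n - 3) = 2 * g r True"
    using Wpoly_g r by auto
  show ?thesis unfolding w g_rec by (simp add: algebra_simps)
qed


end
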